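(* Let $(\mathcal{C},\mathbb{E},\mathfrak{s})$ be an extriangulated category and $\mathbb{F}\subseteq\mathbb{E}$ an additive subfunctor. Let $K\to P\xrightarrow{p}C\overset{\gamma}{\dashrightarrow}$ be an $\mathbb{E}$-triangle with $p$ an $\mathbb{E}$-projective morphism, and let $\varphi:X\to C$ be a morphism. Then $\varphi$ is an $\mathbb{F}$-phantom morphism if and only if $\varphi^\star\gamma\in\mathbb{F}(X,K)$, i.e. the $\mathbb{E}$-triangle $K\to Y\to X\overset{\varphi^\star\gamma}{\dashrightarrow}$ realizing $\varphi^\star\gamma$ is an $\mathbb{F}$-triangle.
   Context: An extriangulated category $(\mathcal{C},\mathbb{E},\mathfrak{s})$ in the sense of Nakaoka–Palu consists of an additive category $\mathcal{C}$, a biadditive functor $\mathbb{E}:\mathcal{C}^{\mathrm{op}}\times\mathcal{C}\to\mathrm{Ab}$ and an additive realization $\mathfrak{s}$ assigning to each $\delta\in\mathbb{E}(C,A)$ an equivalence class of sequences $A\to B\to C$ (an $\mathbb{E}$-triangle $A\to B\to C\overset{\delta}{\dashrightarrow}$), satisfying axioms (ET1)–(ET4) and (ET3)$^{\mathrm{op}}$, (ET4)$^{\mathrm{op}}$. For $\delta\in\mathbb{E}(C,A)$, $a:A\to A'$, $c:C'\to C$: $a_\star\delta=\mathbb{E}(C,a)(\delta)$, $c^\star\delta=\mathbb{E}(c,A)(\delta)$. An additive subfunctor $\mathbb{F}\subseteq\mathbb{E}$: subgroups $\mathbb{F}(C,A)\subseteq\mathbb{E}(C,A)$ stable under $a_\star,c^\star$;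 an $\mathbb{F}$-triangle is an $\mathbb{E}$-triangle whose extension lies in $\mathbb{F}$. $\varphi:X\to C$ is $\mathbb{F}$-phantom if $\varphi^\star\delta\in\mathbb{F}(X,A)$ for every $A$ and every $\delta\in\mathbb{E}(C,A)$. A morphism $p:P\to C$ is $\mathbb{E}$-projective if $p^\star\delta=0$ for every $\delta\in\mathbb{E}(C,A)$ and every $A$. *)

theory Defs
  imports "HOL-Algebra.Group"
begin

text \<open>
  An extriangulated category is encoded as a record:
  objects 'o, morphisms 'm, extension elements 'e.
  hom X Y is the hom-set, cmp g f is the composite g o f, idm X the identity,
  madd the addition of morphisms (abelian group on each hom set, zero mzero X Y).
  ext C A is the group E(C,A) (addition eadd, zero ezero C A).
  push a d is the pushforward a_star d, pull c d is the pullback c^star d.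
  real C A d B x y means that the sequence A -x-> B -y-> C lies in the
  equivalence class s(d) assigned by the realization s.
\<close>

record ('o, 'm, 'e) extri =
  ob    :: "'o set"
  hom   :: "'o \<Rightarrow> 'o \<Rightarrow> 'm set"
  cmp   :: "'m \<Rightarrow> 'm \<Rightarrow> 'm"
  idm   :: "'o \<Rightarrow> 'm"
  madd  :: "'m \<Rightarrow> 'm \<Rightarrow> 'm"
  mzero :: "'o \<Rightarrow> 'o \<Rightarrow> 'm"
  ext   :: "'o \<Rightarrow> 'o \<Rightarrow> 'e set"
  eadd  :: "'e \<Rightarrow> 'e \<Rightarrow> 'e"
  ezero :: "'o \<Rightarrow> 'o \<Rightarrow> 'e"
  push  :: "'m \<Rightarrow> 'e \<Rightarrow> 'e"
  pull  :: "'m \<Rightarrow> 'e \<Rightarrow> 'e"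
  real  :: "'o \<Rightarrow> 'o \<Rightarrow> 'e \<Rightarrow> 'o \<Rightarrow> 'm \<Rightarrow> 'm \<Rightarrow> bool"

definition is_category :: "('o, 'm, 'e, 'z) extri_scheme \<Rightarrow> bool" where
  "is_category CC \<longleftrightarrow>
     (\<forall>X\<in>ob CC. idm CC X \<in> hom CC X X) \<and>
     (\<forall>X\<in>ob CC. \<forall>Y\<in>ob CC. \<forall>Z\<in>ob CC. \<forall>f\<in>hom CC X Y. \<forall>g\<in>hom CC Y Z.
         cmp CC g f \<in> hom CC X Z) \<and>
     (\<forall>W\<in>ob CC. \<forall>X\<in>ob CC. \<forall>Y\<in>ob CC. \<forall>Z\<in>ob CC.
       \<forall>f\<in>hom CC W X. \<forall>g\<in>hom CC X Y. \<forall>h\<in>hom CC Y Z.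
         cmp CC h (cmp CC g f) = cmp CC (cmp CC h g) f) \<and>
     (\<forall>X\<in>ob CC. \<forall>Y\<in>ob CC. \<forall>f\<in>hom CC X Y.
         cmp CC f (idm CC X) = f \<and> cmp CC (idm CC Y) f = f)"

definition is_preadditive :: "('o, 'm, 'e, 'z) extri_scheme \<Rightarrow> bool" where
  "is_preadditive CC \<longleftrightarrow>
     (\<forall>X\<in>ob CC. \<forall>Y\<in>ob CC.
        comm_group \<lparr>carrier = hom CC X Y, mult = madd CC, one = mzero CC X Y\<rparr>) \<and>
     (\<forall>X\<in>ob CC. \<forall>Y\<in>ob CC. \<forall>Z\<in>ob CC. \<forall>f\<in>hom CC X Y. \<forall>g\<in>hom CC Y Z. \<forall>g'\<in>hom CC Y Z.
         cmp CC (madd CC g g') f = madd CC (cmp CC g f) (cmp CC g' f)) \<and>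
     (\<forall>X\<in>ob CC. \<forall>Y\<in>ob CC. \<forall>Z\<in>ob CC. \<forall>f\<in>hom CC X Y. \<forall>f'\<in>hom CC X Y. \<forall>g\<in>hom CC Y Z.
         cmp CC g (madd CC f f') = madd CC (cmp CC g f) (cmp CC g f'))"

definition is_biproduct ::
  "('o, 'm, 'e, 'z) extri_scheme \<Rightarrow> 'o \<Rightarrow> 'o \<Rightarrow> 'o \<Rightarrow> 'm \<Rightarrow> 'm \<Rightarrow> 'm \<Rightarrow> 'm \<Rightarrow> bool" where
  "is_biproduct CC X Y S i1 i2 p1 p2 \<longleftrightarrow>
     X \<in> ob CC \<and> Y \<in> ob CC \<and> S \<in> ob CC \<and>
     i1 \<in> hom CC X S \<and> i2 \<in> hom CC Y S \<and> p1 \<in> hom CC S X \<and> p2 \<in> hom CC S Y \<and>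
     cmp CC p1 i1 = idm CC X \<and> cmp CC p2 i2 = idm CC Y \<and>
     cmp CC p1 i2 = mzero CC Y X \<and> cmp CC p2 i1 = mzero CC X Y \<and>
     madd CC (cmp CC i1 p1) (cmp CC i2 p2) = idm CC S"

definition is_additive :: "('o, 'm, 'e, 'z) extri_scheme \<Rightarrow> bool" where
  "is_additive CC \<longleftrightarrow> is_category CC \<and> is_preadditive CC \<and>
     (\<exists>Z\<in>ob CC. \<forall>X\<in>ob CC. (\<exists>!f. f \<in> hom CC Z X) \<and> (\<exists>!f. f \<in> hom CC X Z)) \<and>
     (\<forall>X\<in>ob CC. \<forall>Y\<in>ob CC. \<exists>S i1 i2 p1 p2. is_biproduct CC X Y S i1 i2 p1 p2)"

definition is_iso :: "('o, 'm, 'e, 'z) extri_scheme \<Rightarrow> 'o \<Rightarrow> 'o \<Rightarrow> 'm \<Rightarrow> bool" where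
  "is_iso CC X Y f \<longleftrightarrow> X \<in> ob CC \<and> Y \<in> ob CC \<and> f \<in> hom CC X Y \<and>
     (\<exists>g\<in>hom CC Y X. cmp CC g f = idm CC X \<and> cmp CC f g = idm CC Y)"

definition is_biadditive_E :: "('o, 'm, 'e, 'z) extri_scheme \<Rightarrow> bool" where
  "is_biadditive_E CC \<longleftrightarrow>
     (\<forall>C\<in>ob CC. \<forall>A\<in>ob CC.
        comm_group \<lparr>carrier = ext CC C A, mult = eadd CC, one = ezero CC C A\<rparr>) \<and>
     (\<forall>C\<in>ob CC. \<forall>A\<in>ob CC. \<forall>A'\<in>ob CC. \<forall>a\<in>hom CC A A'. \<forall>d\<in>ext CC C A.
        push CC a d \<in> ext CC C A') \<and>
     (\<forall>C\<in>ob CC. \<forall>C'\<in>ob CC. \<forall>A\<in>ob CC. \<forall>c\<in>hom CC C' C. \<forall>d\<in>ext CC C A.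
        pull CC c d \<in> ext CC C' A) \<and>
     (\<forall>C\<in>ob CC. \<forall>A\<in>ob CC. \<forall>d\<in>ext CC C A.
        push CC (idm CC A) d = d \<and> pull CC (idm CC C) d = d) \<and>
     (\<forall>C\<in>ob CC. \<forall>A\<in>ob CC. \<forall>A'\<in>ob CC. \<forall>A''\<in>ob CC. \<forall>a\<in>hom CC A A'. \<forall>b\<in>hom CC A' A''.
        \<forall>d\<in>ext CC C A. push CC (cmp CC b a) d = push CC b (push CC a d)) \<and>
     (\<forall>C\<in>ob CC. \<forall>C'\<in>ob CC. \<forall>C''\<in>ob CC. \<forall>A\<in>ob CC. \<forall>c\<in>hom CC C' C. \<forall>c'\<in>hom CC C'' C'.
        \<forall>d\<in>ext CC C A. pull CC (cmp CC c c') d = pull CC c' (pull CC c d)) \<and>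
     (\<forall>C\<in>ob CC. \<forall>C'\<in>ob CC. \<forall>A\<in>ob CC. \<forall>A'\<in>ob CC. \<forall>a\<in>hom CC A A'. \<forall>c\<in>hom CC C' C.
        \<forall>d\<in>ext CC C A. push CC a (pull CC c d) = pull CC c (push CC a d)) \<and>
     (\<forall>C\<in>ob CC. \<forall>A\<in>ob CC. \<forall>A'\<in>ob CC. \<forall>a\<in>hom CC A A'. \<forall>d\<in>ext CC C A. \<forall>d'\<in>ext CC C A.
        push CC a (eadd CC d d') = eadd CC (push CC a d) (push CC a d')) \<and>
     (\<forall>C\<in>ob CC. \<forall>C'\<in>ob CC. \<forall>A\<in>ob CC. \<forall>c\<in>hom CC C' C. \<forall>d\<in>ext CC C A. \<forall>d'\<in>ext CC C A.
        pull CC c (eadd CC d d') = eadd CC (pull CC c d) (pull CC c d')) \<and>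
     (\<forall>C\<in>ob CC. \<forall>A\<in>ob CC. \<forall>A'\<in>ob CC. \<forall>a\<in>hom CC A A'. \<forall>a'\<in>hom CC A A'. \<forall>d\<in>ext CC C A.
        push CC (madd CC a a') d = eadd CC (push CC a d) (push CC a' d)) \<and>
     (\<forall>C\<in>ob CC. \<forall>C'\<in>ob CC. \<forall>A\<in>ob CC. \<forall>c\<in>hom CC C' C. \<forall>c'\<in>hom CC C' C. \<forall>d\<in>ext CC C A.
        pull CC (madd CC c c') d = eadd CC (pull CC c d) (pull CC c' d))"

definition is_realization :: "('o, 'm, 'e, 'z) extri_scheme \<Rightarrow> bool" where
  "is_realization CC \<longleftrightarrow>
     (\<forall>C A d B x y. real CC C A d B x y \<longrightarrow>
        C \<in> ob CC \<and> A \<in> ob CC \<and> B \<in> ob CC \<and> d \<in> ext CC C A \<and>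
        x \<in> hom CC A B \<and> y \<in> hom CC B C) \<and>
     (\<forall>C\<in>ob CC. \<forall>A\<in>ob CC. \<forall>d\<in>ext CC C A. \<exists>B x y. real CC C A d B x y) \<and>
     (\<forall>C A d B x y B' x' y'. real CC C A d B x y \<longrightarrow>
        (real CC C A d B' x' y' \<longleftrightarrow>
          x' \<in> hom CC A B' \<and> y' \<in> hom CC B' C \<and>
          (\<exists>b. is_iso CC B B' b \<and> cmp CC b x = x' \<and> cmp CC y' b = y)))"

definition is_additive_realization :: "('o, 'm, 'e, 'z) extri_scheme \<Rightarrow> bool" where
  "is_additive_realization CC \<longleftrightarrow>
     \<comment> \<open>morphisms of extensions are realized\<close>
     (\<forall>C A d B x y C' A' d' B' x' y' a c.
        real CC C A d B x y \<and> real CC C' A' d' B' x' y' \<and>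
        a \<in> hom CC A A' \<and> c \<in> hom CC C C' \<and> push CC a d = pull CC c d' \<longrightarrow>
        (\<exists>b\<in>hom CC B B'. cmp CC b x = cmp CC x' a \<and> cmp CC y' b = cmp CC c y)) \<and>
     \<comment> \<open>s(0) is the split sequence\<close>
     (\<forall>A C S iA iC pA pC. is_biproduct CC A C S iA iC pA pC \<longrightarrow>
        real CC C A (ezero CC C A) S iA pC) \<and>
     \<comment> \<open>s(d \<oplus> d') = s(d) \<oplus> s(d')\<close>
     (\<forall>C A d B x y C' A' d' B' x' y' SA iA iA' pA pA' SB iB iB' pB pB' SC iC iC' pC pC' t.
        real CC C A d B x y \<and> real CC C' A' d' B' x' y' \<and>
        is_biproduct CC A A' SA iA iA' pA pA' \<and>
        is_biproduct CC B B' SB iB iB' pB pB' \<and>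
        is_biproduct CC C C' SC iC iC' pC pC' \<and>
        t \<in> ext CC SC SA \<and>
        pull CC iC (push CC pA t) = d \<and> pull CC iC' (push CC pA' t) = d' \<and>
        pull CC iC' (push CC pA t) = ezero CC C' A \<and> pull CC iC (push CC pA' t) = ezero CC C A'
        \<longrightarrow> real CC SC SA t SB
              (madd CC (cmp CC iB (cmp CC x pA)) (cmp CC iB' (cmp CC x' pA')))
              (madd CC (cmp CC iC (cmp CC y pB)) (cmp CC iC' (cmp CC y' pB'))))"

definition ET3 :: "('o, 'm, 'e, 'z) extri_scheme \<Rightarrow> bool" where
  "ET3 CC \<longleftrightarrow>
     (\<forall>C A d B x y C' A' d' B' x' y' a b.
        real CC C A d B x y \<and> real CC C' A' d' B' x' y' \<and>
        a \<in> hom CC A A' \<and> b \<in> hom CC B B' \<and> cmp CC b x = cmp CC x' a \<longrightarrow>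
        (\<exists>c\<in>hom CC C C'. cmp CC c y = cmp CC y' b \<and> push CC a d = pull CC c d'))"

definition ET3op :: "('o, 'm, 'e, 'z) extri_scheme \<Rightarrow> bool" where
  "ET3op CC \<longleftrightarrow>
     (\<forall>C A d B x y C' A' d' B' x' y' b c.
        real CC C A d B x y \<and> real CC C' A' d' B' x' y' \<and>
        b \<in> hom CC B B' \<and> c \<in> hom CC C C' \<and> cmp CC c y = cmp CC y' b \<longrightarrow>
        (\<exists>a\<in>hom CC A A'. cmp CC b x = cmp CC x' a \<and> push CC a d = pull CC c d'))"

definition ET4 :: "('o, 'm, 'e, 'z) extri_scheme \<Rightarrow> bool" where
  "ET4 CC \<longleftrightarrow>
     (\<forall>A B C D F d f f' d' g g'.
        real CC D A d B f f' \<and> real CC F B d' C g g' \<longrightarrow>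
        (\<exists>E h h' dd e d''. E \<in> ob CC \<and> dd \<in> hom CC D E \<and> e \<in> hom CC E F \<and>
           real CC E A d'' C h h' \<and>
           h = cmp CC g f \<and> cmp CC dd f' = cmp CC h' g \<and> cmp CC e h' = g' \<and>
           real CC F D (push CC f' d') E dd e \<and>
           pull CC dd d'' = d \<and> push CC f d'' = pull CC e d'))"

definition ET4op :: "('o, 'm, 'e, 'z) extri_scheme \<Rightarrow> bool" where
  "ET4op CC \<longleftrightarrow>
     (\<forall>A B C D F d f f' d' g g'.
        real CC B D d A f' f \<and> real CC C F d' B g' g \<longrightarrow>
        (\<exists>E h h' dd e d''. E \<in> ob CC \<and> dd \<in> hom CC D E \<and> e \<in> hom CC E F \<and>
           real CC C E d'' A h' h \<and>
           h = cmp CC g f \<and> cmp CC h' dd = f' \<and> cmp CC f h' = cmp CC g' e \<and>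
           real CC F D (pull CC g' d) E dd e \<and>
           d' = push CC e d'' \<and> push CC dd d = pull CC g d''))"

definition extriangulated :: "('o, 'm, 'e, 'z) extri_scheme \<Rightarrow> bool" where
  "extriangulated CC \<longleftrightarrow> is_additive CC \<and> is_biadditive_E CC \<and> is_realization CC \<and>
     is_additive_realization CC \<and> ET3 CC \<and> ET3op CC \<and> ET4 CC \<and> ET4op CC"

definition additive_subfunctor ::
  "('o, 'm, 'e, 'z) extri_scheme \<Rightarrow> ('o \<Rightarrow> 'o \<Rightarrow> 'e set) \<Rightarrow> bool" where
  "additive_subfunctor CC F \<longleftrightarrow>
     (\<forall>C\<in>ob CC. \<forall>A\<in>ob CC.
        subgroup (F C A) \<lparr>carrier = ext CC C A, mult = eadd CC, one = ezero CC C A\<rparr>) \<and>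
     (\<forall>C\<in>ob CC. \<forall>A\<in>ob CC. \<forall>A'\<in>ob CC. \<forall>a\<in>hom CC A A'. \<forall>d\<in>F C A.
        push CC a d \<in> F C A') \<and>
     (\<forall>C\<in>ob CC. \<forall>C'\<in>ob CC. \<forall>A\<in>ob CC. \<forall>c\<in>hom CC C' C. \<forall>d\<in>F C A.
        pull CC c d \<in> F C' A)"

definition F_triangle ::
  "('o, 'm, 'e, 'z) extri_scheme \<Rightarrow> ('o \<Rightarrow> 'o \<Rightarrow> 'e set) \<Rightarrow>
   'o \<Rightarrow> 'o \<Rightarrow> 'e \<Rightarrow> 'o \<Rightarrow> 'm \<Rightarrow> 'm \<Rightarrow> bool" where
  "F_triangle CC F C A d B x y \<longleftrightarrow> real CC C A d B x y \<and> d \<in> F C A"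

definition F_phantom ::
  "('o, 'm, 'e, 'z) extri_scheme \<Rightarrow> ('o \<Rightarrow> 'o \<Rightarrow> 'e set) \<Rightarrow> 'o \<Rightarrow> 'o \<Rightarrow> 'm \<Rightarrow> bool" where
  "F_phantom CC F X C phi \<longleftrightarrow> phi \<in> hom CC X C \<and>
     (\<forall>A\<in>ob CC. \<forall>d\<in>ext CC C A. pull CC phi d \<in> F X A)"

definition E_projective_morphism ::
  "('o, 'm, 'e, 'z) extri_scheme \<Rightarrow> 'o \<Rightarrow> 'o \<Rightarrow> 'm \<Rightarrow> bool" where
  "E_projective_morphism CC P C p \<longleftrightarrow> p \<in> hom CC P C \<and>
     (\<forall>A\<in>ob CC. \<forall>d\<in>ext CC C A. pull CC p d = ezero CC P A)"

end

theory Submission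
  imports Defs
begin

lemma cat_id: "is_category CC \<Longrightarrow> X \<in> ob CC \<Longrightarrow> idm CC X \<in> hom CC X X"
  unfolding is_category_def by blast
lemma cat_comp: "is_category CC \<Longrightarrow> X \<in> ob CC \<Longrightarrow> Y \<in> ob CC \<Longrightarrow> Z \<in> ob CC \<Longrightarrow>
  f \<in> hom CC X Y \<Longrightarrow> g \<in> hom CC Y Z \<Longrightarrow> cmp CC g f \<in> hom CC X Z"
  unfolding is_category_def by blast
lemma cat_assoc: "is_category CC \<Longrightarrow> W \<in> ob CC \<Longrightarrow> X \<in> ob CC \<Longrightarrow> Y \<in> ob CC \<Longrightarrow> Z \<in> ob CC \<Longrightarrow>
  f \<in> hom CC W X \<Longrightarrow> g \<in> hom CC X Y \<Longrightarrow> h \<in> hom CC Y Z \<Longrightarrow>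
  cmp CC h (cmp CC g f) = cmp CC (cmp CC h g) f"
  unfolding is_category_def by blast
lemma cat_idr: "is_category CC \<Longrightarrow> X \<in> ob CC \<Longrightarrow> Y \<in> ob CC \<Longrightarrow> f \<in> hom CC X Y \<Longrightarrow>
  cmp CC f (idm CC X) = f \<and> cmp CC (idm CC Y) f = f"
  unfolding is_category_def by blast

lemma exact_lift:
  fixes CC :: "('o, 'm, 'e, 'z) extri_scheme"
  assumes E: "extriangulated CC"
    and g: "real CC C K \<gamma> P i p"
    and pr: "E_projective_morphism CC P C p"
    and A: "A \<in> ob CC" and d: "d \<in> ext CC C A"
  shows "\<exists>a\<in>hom CC K A. push CC a \<gamma> = d"
proof -
  have cat: "is_category CC" and add: "is_additive CC" and bi: "is_biadditive_E CC"
    and re: "is_realization CC" and ar: "is_additive_realization CC" and e3: "ET3op CC"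
    using E unfolding extriangulated_def is_additive_def by auto
  from g re have obs: "C \<in> ob CC" "K \<in> ob CC" "P \<in> ob CC" "\<gamma> \<in> ext CC C K"
    "i \<in> hom CC K P" "p \<in> hom CC P C"
    unfolding is_realization_def by blast+
  have ex: "\<forall>C\<in>ob CC. \<forall>A\<in>ob CC. \<forall>d\<in>ext CC C A. \<exists>B x y. real CC C A d B x y"
    using re unfolding is_realization_def by (elim conjE)
  from ex A obs(1) d obtain B x y where r: "real CC C A d B x y" by blast
  from r re have rB: "B \<in> ob CC" "x \<in> hom CC A B" "y \<in> hom CC B C"
    unfolding is_realization_def by blast+
  from add A obs(3) obtain S iA iP pA pP where bp: "is_biproduct CC A P S iA iP pA pP"
    unfolding is_additive_def by blast
  from ar bp have r0: "real CC P A (ezero CC P A) S iA pP"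
    unfolding is_additive_realization_def by blast
  have cg: "comm_group \<lparr>carrier = ext CC P A, mult = eadd CC, one = ezero CC P A\<rparr>"
  proof -
    have "\<forall>C\<in>ob CC. \<forall>A\<in>ob CC.
        comm_group \<lparr>carrier = ext CC C A, mult = eadd CC, one = ezero CC C A\<rparr>"
      using bi unfolding is_biadditive_E_def by (elim conjE)
    then show ?thesis using A obs by blast
  qed
  then have z: "ezero CC P A \<in> ext CC P A"
    using comm_group.axioms(2) group.is_monoid monoid.one_closed by fastforce
  have pi: "push CC (idm CC A) (ezero CC P A) = ezero CC P A"
  proof -
    have "\<forall>C\<in>ob CC. \<forall>A\<in>ob CC. \<forall>d\<in>ext CC C A.
        push CC (idm CC A) d = d \<and> pull CC (idm CC C) d = d"
      using bi unfolding is_biadditive_E_def by (elim conjE)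
    then show ?thesis using A obs z by blast
  qed
  have pz: "pull CC p d = ezero CC P A" using pr A d unfolding E_projective_morphism_def by blast
  have idA: "idm CC A \<in> hom CC A A" using cat_id[OF cat A] .
  have ar1: "\<forall>C A d B x y C' A' d' B' x' y' a c.
        real CC C A d B x y \<and> real CC C' A' d' B' x' y' \<and>
        a \<in> hom CC A A' \<and> c \<in> hom CC C C' \<and> push CC a d = pull CC c d' \<longrightarrow>
        (\<exists>b\<in>hom CC B B'. cmp CC b x = cmp CC x' a \<and> cmp CC y' b = cmp CC c y)"
    using ar unfolding is_additive_realization_def by (elim conjE)
  have "\<exists>b\<in>hom CC S B. cmp CC b iA = cmp CC x (idm CC A) \<and> cmp CC y b = cmp CC p pP"
    using ar1[rule_format, OF conjI[OF r0 conjI[OF r conjI[OF idA conjI[OF obs(6)]]]]] pi pz by simp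
  then obtain b where b: "b \<in> hom CC S B"
    "cmp CC y b = cmp CC p pP" by blast
  from bp have bpf: "S \<in> ob CC" "iP \<in> hom CC P S" "pP \<in> hom CC S P" "cmp CC pP iP = idm CC P"
    unfolding is_biproduct_def by auto
  define gg where "gg = cmp CC b iP"
  have ggh: "gg \<in> hom CC P B" using cat_comp[OF cat obs(3) bpf(1) rB(1) bpf(2) b(1)] unfolding gg_def .
  have "cmp CC y gg = cmp CC (cmp CC y b) iP"
    using cat_assoc[OF cat obs(3) bpf(1) rB(1) obs(1) bpf(2) b(1) rB(3)] unfolding gg_def .
  also have "\<dots> = cmp CC (cmp CC p pP) iP" using b by simp
  also have "\<dots> = cmp CC p (cmp CC pP iP)"
    using cat_assoc[OF cat obs(3) bpf(1) obs(3) obs(1) bpf(2) bpf(3) obs(6)] by simp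
  also have "\<dots> = p" using cat_idr[OF cat obs(3) obs(1) obs(6)] bpf(4) by simp
  finally have yg: "cmp CC y gg = p" .
  have idC: "idm CC C \<in> hom CC C C" and cp: "cmp CC (idm CC C) p = p"
    using cat_id[OF cat obs(1)] cat_idr[OF cat obs(3) obs(1) obs(6)] by auto
  have e3': "\<forall>C A d B x y C' A' d' B' x' y' b c.
        real CC C A d B x y \<and> real CC C' A' d' B' x' y' \<and>
        b \<in> hom CC B B' \<and> c \<in> hom CC C C' \<and> cmp CC c y = cmp CC y' b \<longrightarrow>
        (\<exists>a\<in>hom CC A A'. cmp CC b x = cmp CC x' a \<and> push CC a d = pull CC c d')"
    using e3 unfolding ET3op_def .
  have "\<exists>a\<in>hom CC K A. cmp CC gg i = cmp CC x a \<and> push CC a \<gamma> = pull CC (idm CC C) d"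
    using e3'[rule_format, OF conjI[OF g conjI[OF r conjI[OF ggh conjI[OF idC]]]]] cp yg by simp
  then obtain a where "a \<in> hom CC K A" "push CC a \<gamma> = pull CC (idm CC C) d" by blast
  moreover have "pull CC (idm CC C) d = d"
  proof -
    have "\<forall>C\<in>ob CC. \<forall>A\<in>ob CC. \<forall>d\<in>ext CC C A.
        push CC (idm CC A) d = d \<and> pull CC (idm CC C) d = d"
      using bi unfolding is_biadditive_E_def by (elim conjE)
    then show ?thesis using A obs d by blast
  qed
  ultimately show ?thesis by auto
qed

theorem lemma4p1:
  fixes CC :: "('o, 'm, 'e, 'z) extri_scheme"
    and F :: "'o \<Rightarrow> 'o \<Rightarrow> 'e set"
  assumes "extriangulated CC"
    and "additive_subfunctor CC F"
    and "real CC C K \<gamma> P i p"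
    and "E_projective_morphism CC P C p"
    and "X \<in> ob CC"
    and "\<phi> \<in> hom CC X C"
  shows "(F_phantom CC F X C \<phi> \<longleftrightarrow> pull CC \<phi> \<gamma> \<in> F X K) \<and>
         (F_phantom CC F X C \<phi> \<longleftrightarrow>
            (\<forall>Y u v. real CC X K (pull CC \<phi> \<gamma>) Y u v \<longrightarrow> F_triangle CC F X K (pull CC \<phi> \<gamma>) Y u v))"
proof -
  have bi: "is_biadditive_E CC" and re: "is_realization CC"
    using assms(1) unfolding extriangulated_def by auto
  from assms(3) re have obs: "C \<in> ob CC" "K \<in> ob CC" "P \<in> ob CC" "\<gamma> \<in> ext CC C K"
    unfolding is_realization_def by blast+
  have pl: "\<forall>C\<in>ob CC. \<forall>C'\<in>ob CC. \<forall>A\<in>ob CC. \<forall>c\<in>hom CC C' C. \<forall>d\<in>ext CC C A.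
        pull CC c d \<in> ext CC C' A" using bi unfolding is_biadditive_E_def by (elim conjE)
  have pe: "pull CC \<phi> \<gamma> \<in> ext CC X K" using pl obs assms(5,6) by blast
  have ex: "\<forall>C\<in>ob CC. \<forall>A\<in>ob CC. \<forall>d\<in>ext CC C A. \<exists>B x y. real CC C A d B x y"
    using re unfolding is_realization_def by (elim conjE)
  have 1: "F_phantom CC F X C \<phi> \<longleftrightarrow> pull CC \<phi> \<gamma> \<in> F X K"
  proof
    assume "F_phantom CC F X C \<phi>" then show "pull CC \<phi> \<gamma> \<in> F X K"
      using obs unfolding F_phantom_def by blast
  next
    assume h: "pull CC \<phi> \<gamma> \<in> F X K"
    show "F_phantom CC F X C \<phi>" unfolding F_phantom_def
    proof (intro conjI ballI)
      show "\<phi> \<in> hom CC X C" by (rule assms(6))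
      fix A d assume A: "A \<in> ob CC" and d: "d \<in> ext CC C A"
      from exact_lift[OF assms(1,3,4) A d] obtain a where a: "a \<in> hom CC K A" "push CC a \<gamma> = d"
        by blast
      have "pull CC \<phi> d = push CC a (pull CC \<phi> \<gamma>)"
      proof -
        have "\<forall>C\<in>ob CC. \<forall>C'\<in>ob CC. \<forall>A\<in>ob CC. \<forall>A'\<in>ob CC. \<forall>a\<in>hom CC A A'. \<forall>c\<in>hom CC C' C.
          \<forall>d\<in>ext CC C A. push CC a (pull CC c d) = pull CC c (push CC a d)"
          using bi unfolding is_biadditive_E_def by (elim conjE)
        then have "push CC a (pull CC \<phi> \<gamma>) = pull CC \<phi> (push CC a \<gamma>)"
          using obs A a assms(5,6) by blast
        then show ?thesis using a by simp
      qed
      also have "\<dots> \<in> F X A" using assms(2) h a A obs assms(5)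
        unfolding additive_subfunctor_def by blast
      finally show "pull CC \<phi> d \<in> F X A" .
    qed
  qed
  from ex pe assms(5) obs obtain Y u v where "real CC X K (pull CC \<phi> \<gamma>) Y u v"
    by blast
  then have 2: "pull CC \<phi> \<gamma> \<in> F X K \<longleftrightarrow>
            (\<forall>Y u v. real CC X K (pull CC \<phi> \<gamma>) Y u v \<longrightarrow> F_triangle CC F X K (pull CC \<phi> \<gamma>) Y u v)"
    unfolding F_triangle_def by blast
  from 1 2 show ?thesis by blast
qed

end
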